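(* If $n>1$ and $\gcd(n,30)=1$, then there exists an $n\times n$ panstochastic matrix that is not a convex combination of panmagic permutation matrices.
   Context: Rows and columns of $n\times n$ matrices are indexed by $\Omega_n=\{0,\dots,n-1\}$. The $k$th upward (resp. downward) diagonal consists of positions $(i,j)$ with $i+j\equiv k$ (resp. $i-j\equiv k$) $\pmod n$. A real $n\times n$ matrix is panstochastic if its entries are nonnegative and its entries along every row, column, upward diagonal and downward diagonal sum to $1$. A panmagic permutation matrix is a permutation matrix $P_\pi$ ($(i,j)$ entry $1$ if $i=\pi(j)$, else $0$) that is panstochastic. A convex combination is a linear combination with nonnegative coefficients summing to $1$. *)

theory Defs
  imports Complex_Main "HOL-Combinatorics.Permutations"
begin

text \<open>An n x n real matrix is represented as a function nat => nat => real;
  only the entries with indices in {0..<n} are relevant.\<close>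

definition panstochastic :: "nat \<Rightarrow> (nat \<Rightarrow> nat \<Rightarrow> real) \<Rightarrow> bool" where
  "panstochastic n M \<longleftrightarrow>
     (\<forall>i<n. \<forall>j<n. 0 \<le> M i j) \<and>
     (\<forall>i<n. (\<Sum>j<n. M i j) = 1) \<and>
     (\<forall>j<n. (\<Sum>i<n. M i j) = 1) \<and>
     (\<forall>k<n. (\<Sum>(i,j)\<in>{(i,j). i < n \<and> j < n \<and> (i + j) mod n = k}. M i j) = 1) \<and>
     (\<forall>k<n. (\<Sum>(i,j)\<in>{(i,j). i < n \<and> j < n \<and> (i + n - j) mod n = k}. M i j) = 1)"

definition perm_mat :: "nat \<Rightarrow> (nat \<Rightarrow> nat) \<Rightarrow> nat \<Rightarrow> nat \<Rightarrow> real" where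
  "perm_mat n \<pi> i j = (if i = \<pi> j then 1 else 0)"

definition panmagic_perm :: "nat \<Rightarrow> (nat \<Rightarrow> nat) \<Rightarrow> bool" where
  "panmagic_perm n \<pi> \<longleftrightarrow> \<pi> permutes {..<n} \<and> panstochastic n (perm_mat n \<pi>)"

definition convex_comb_panmagic :: "nat \<Rightarrow> (nat \<Rightarrow> nat \<Rightarrow> real) \<Rightarrow> bool" where
  "convex_comb_panmagic n M \<longleftrightarrow>
     (\<exists>S c. finite S \<and> (\<forall>\<pi>\<in>S. panmagic_perm n \<pi>) \<and>
        (\<forall>\<pi>\<in>S. 0 \<le> c \<pi>) \<and> (\<Sum>\<pi>\<in>S. c \<pi>) = (1::real) \<and>
        (\<forall>i<n. \<forall>j<n. M i j = (\<Sum>\<pi>\<in>S. c \<pi> * perm_mat n \<pi> i j)))"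

end

theory Submission
  imports Defs
begin

definition ind :: "nat \<Rightarrow> int \<Rightarrow> real" where
  "ind n x = (if int n dvd x then 1 else 0)"

lemma ind_cong: "int n dvd (x - y) \<Longrightarrow> ind n x = ind n y"
  unfolding ind_def by (metis dvd_add_right_iff diff_add_cancel)

lemma dvd_mod_diff: "(m::int) dvd (x mod m - x)"
proof -
  have "x mod m - x = m * (- (x div m))" using minus_div_mult_eq_mod[of x m] by (simp add: algebra_simps)
  then show ?thesis by simp
qed

lemma int_dvd_eq:
  assumes "int n dvd (int a - int b)" "a < n" "b < n"
  shows "a = b"
proof (rule ccontr)
  assume "a \<noteq> b"
  then have "int a - int b \<noteq> 0" by simp
  from dvd_imp_le_int[OF this assms(1)] assms(2,3) show False by simp
qed

lemma L_unit:
  assumes n: "n > 0" and cop: "coprime u (int n)"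
  shows "(\<Sum>j<n. ind n (u * int j + c)) = 1"
proof -
  obtain s t where st: "s * u + t * int n = 1"
    using bezout_int[of u "int n"] cop by (auto simp: coprime_iff_gcd_eq_1)
  define j0 where "j0 = nat ((- c * s) mod int n)"
  have j0n: "j0 < n" using n unfolding j0_def by (simp add: nat_less_iff)
  have ij0: "int j0 = (- c * s) mod int n" unfolding j0_def using n by simp
  have d0: "int n dvd (u * int j0 + c)"
  proof -
    define q where "q = (- c * s) div int n"
    have e1: "int j0 = - c * s - q * int n" unfolding ij0 q_def by (simp add: minus_div_mult_eq_mod)
    have "u * int j0 + c = int n * (c * t - u * q)"
      using st e1 by algebra
    then show ?thesis by simp
  qed
  have uniq: "j = j0" if "j < n" "int n dvd (u * int j + c)" for j
  proof -
    have "int n dvd ((u * int j + c) - (u * int j0 + c))" using that(2) d0 by (rule dvd_diff)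
    then have "int n dvd (u * (int j - int j0))" by (simp add: algebra_simps)
    moreover have "coprime (int n) u" using cop by (simp add: coprime_commute)
    ultimately have "int n dvd (int j - int j0)" by (simp add: coprime_dvd_mult_right_iff)
    then show ?thesis using int_dvd_eq that(1) j0n by blast
  qed
  have "(\<Sum>j<n. ind n (u * int j + c)) = (\<Sum>j<n. if j = j0 then 1 else 0)"
  proof (rule sum.cong)
    fix j assume "j \<in> {..<n}"
    then have jn: "j < n" by simp
    show "ind n (u * int j + c) = (if j = j0 then 1 else 0)"
    proof (cases "j = j0")
      case True then show ?thesis using d0 by (simp add: ind_def)
    next
      case False
      then have "\<not> int n dvd (u * int j + c)" using uniq jn by blast
      then show ?thesis using False by (simp add: ind_def)
    qed
  qed simp
  also have "\<dots> = 1" using j0n by simp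
  finally show ?thesis .
qed

lemma sum_up:
  fixes k n :: nat
  assumes "k < n"
  shows "(\<Sum>(i,j)\<in>{(i,j). i < n \<and> j < n \<and> (i + j) mod n = k}. f i j) = (\<Sum>j<n. f ((k + n - j) mod n) j)"
proof -
  have "(\<Sum>j<n. f ((k + n - j) mod n) j) = (\<Sum>(i,j)\<in>{(i,j). i < n \<and> j < n \<and> (i + j) mod n = k}. f i j)"
  proof (rule sum.reindex_bij_witness[where i = snd and j = "\<lambda>j. ((k + n - j) mod n, j)"])
    fix a assume "a \<in> {(i,j). i < n \<and> j < n \<and> (i + j) mod n = k}"
    then obtain i j where a: "a = (i,j)" "i < n" "j < n" "(i + j) mod n = k" by auto
    have "k + n - j = k + (n - j)" using a(3) by simp
    then have "(k + n - j) mod n = ((i + j) mod n + (n - j)) mod n" using a by simp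
    also have "\<dots> = (i + j + (n - j)) mod n" by (simp add: mod_add_left_eq)
    also have "i + j + (n - j) = i + n" using a by simp
    also have "(i + n) mod n = i" using a by simp
    finally show "((k + n - snd a) mod n, snd a) = a" using a by simp
    show "snd a \<in> {..<n}" using a by simp
  next
    fix j assume "j \<in> {..<n}"
    then have j: "j < n" by simp
    have "((k + n - j) mod n + j) mod n = (k + n - j + j) mod n" by (simp add: mod_add_left_eq)
    also have "k + n - j + j = k + n" using j by simp
    also have "(k + n) mod n = k" using assms by simp
    finally show "((k + n - j) mod n, j) \<in> {(i,j). i < n \<and> j < n \<and> (i + j) mod n = k}"
      using j by auto
    show "snd ((k + n - j) mod n, j) = j" by simp
  qed auto
  then show ?thesis by simp
qed

lemma sum_down:
  fixes k n :: nat
  assumes "k < n"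
  shows "(\<Sum>(i,j)\<in>{(i,j). i < n \<and> j < n \<and> (i + n - j) mod n = k}. f i j) = (\<Sum>j<n. f ((k + j) mod n) j)"
proof -
  have "(\<Sum>j<n. f ((k + j) mod n) j) = (\<Sum>(i,j)\<in>{(i,j). i < n \<and> j < n \<and> (i + n - j) mod n = k}. f i j)"
  proof (rule sum.reindex_bij_witness[where i = snd and j = "\<lambda>j. ((k + j) mod n, j)"])
    fix a assume "a \<in> {(i,j). i < n \<and> j < n \<and> (i + n - j) mod n = k}"
    then obtain i j where a: "a = (i,j)" "i < n" "j < n" "(i + n - j) mod n = k" by auto
    have "(k + j) mod n = ((i + n - j) mod n + j) mod n" using a by simp
    also have "\<dots> = (i + n - j + j) mod n" by (simp only: mod_add_left_eq)
    also have "i + n - j + j = i + n" using a by simp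
    also have "(i + n) mod n = i" using a by simp
    finally show "((k + snd a) mod n, snd a) = a" using a by simp
    show "snd a \<in> {..<n}" using a by simp
  next
    fix j assume "j \<in> {..<n}"
    then have j: "j < n" by simp
    have "((k + j) mod n + n - j) mod n = ((k + j) mod n + (n - j)) mod n" using j by simp
    also have "\<dots> = (k + j + (n - j)) mod n" by (simp add: mod_add_left_eq)
    also have "k + j + (n - j) = k + n" using j by simp
    also have "(k + n) mod n = k" using assms by simp
    finally show "((k + j) mod n, j) \<in> {(i,j). i < n \<and> j < n \<and> (i + n - j) mod n = k}"
      using j assms by auto
    show "snd ((k + j) mod n, j) = j" by simp
  qed auto
  then show ?thesis by simp
qed

lemma ind_up: "j < n \<Longrightarrow> ind n (int ((k + n - j) mod n) - z) = ind n (int k - int j - z)"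
proof -
  assume j: "j < n"
  define X where "X = int k + int n - int j"
  have "int ((k + n - j) mod n) = X mod int n"
    using j unfolding X_def by (simp add: zmod_int of_nat_diff)
  then have "int ((k + n - j) mod n) - z - (int k - int j - z) = (X mod int n - X) + int n"
    unfolding X_def by simp
  moreover have "int n dvd (X mod int n - X) + int n" by (intro dvd_add dvd_mod_diff dvd_refl)
  ultimately show ?thesis by (intro ind_cong) simp
qed

lemma ind_down: "ind n (int ((k + j) mod n) - z) = ind n (int k + int j - z)"
proof -
  define X where "X = int k + int j"
  have "int ((k + j) mod n) = X mod int n" unfolding X_def by (simp add: zmod_int)
  then have "int ((k + j) mod n) - z - (int k + int j - z) = (X mod int n - X)"
    unfolding X_def by simp
  moreover have "int n dvd (X mod int n - X)" by (intro dvd_mod_diff)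
  ultimately show ?thesis by (intro ind_cong) simp
qed

lemma L_unit':
  assumes "n > 0" "coprime u (int n)" "\<And>j. e j = u * int j + c"
  shows "(\<Sum>j<n. ind n (e j)) = 1"
  using L_unit[OF assms(1,2), of c] assms(3) by simp

definition cellv :: "nat \<Rightarrow> int \<Rightarrow> int \<Rightarrow> int \<Rightarrow> int \<Rightarrow> real" where
  "cellv n x y a b = ind n (x - a) * ind n (y - b)"

lemma cops:
  assumes "gcd n 30 = (1::nat)"
  shows "coprime (2::int) (int n)" "coprime (3::int) (int n)" "coprime (5::int) (int n)"
proof -
  have "gcd (int n) (int 30) = 1" using assms by (simp only: gcd_int_int_eq)
  then have c30: "coprime (int n) 30" by (simp add: coprime_iff_gcd_eq_1)
  have e: "(30::int) = 2 * (3 * 5)" by simp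
  have "coprime (int n) (2 * (3 * 5))" using c30 by (simp only: e[symmetric])
  then have "coprime (int n) 2" "coprime (int n) 3" "coprime (int n) 5"
    by (simp_all only: coprime_mult_right_iff)
  then show "coprime (2::int) (int n)" "coprime (3::int) (int n)" "coprime (5::int) (int n)"
    by (simp_all add: coprime_commute)
qed

lemma cell_row:
  assumes "n > 0"
  shows "(\<Sum>j<n. cellv n x (int j) a b) = ind n (x - a)"
proof -
  have "(\<Sum>j<n. cellv n x (int j) a b) = ind n (x - a) * (\<Sum>j<n. ind n (int j - b))"
    unfolding cellv_def by (simp add: sum_distrib_left)
  also have "(\<Sum>j<n. ind n (int j - b)) = 1" by (rule L_unit'[of n 1 _ "-b"]) (use assms in auto)
  finally show ?thesis by simp
qed

lemma cell_col:
  assumes "n > 0"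
  shows "(\<Sum>i<n. cellv n (int i) y a b) = ind n (y - b)"
proof -
  have "(\<Sum>i<n. cellv n (int i) y a b) = ind n (y - b) * (\<Sum>i<n. ind n (int i - a))"
    unfolding cellv_def by (simp add: sum_distrib_left mult.commute)
  also have "(\<Sum>i<n. ind n (int i - a)) = 1" by (rule L_unit'[of n 1 _ "-a"]) (use assms in auto)
  finally show ?thesis by simp
qed

lemma cell_up:
  assumes "n > 0"
  shows "(\<Sum>j<n. cellv n (x - int j) (int j) a b) = ind n (x - (a + b))"
proof -
  have pt: "cellv n (x - int j) (int j) a b = ind n (x - (a + b)) * ind n (int j - b)" for j
  proof (cases "int n dvd (int j - b)")
    case True
    have "int n dvd ((x - int j - a) - (x - (a + b)))"
    proof -
      have "(x - int j - a) - (x - (a + b)) = - (int j - b)" by simp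
      then show ?thesis using True by (simp only: dvd_minus_iff)
    qed
    then show ?thesis unfolding cellv_def using ind_cong by metis
  next
    case False then show ?thesis unfolding cellv_def ind_def by simp
  qed
  have "(\<Sum>j<n. cellv n (x - int j) (int j) a b) = ind n (x - (a + b)) * (\<Sum>j<n. ind n (int j - b))"
    unfolding pt by (simp add: sum_distrib_left)
  also have "(\<Sum>j<n. ind n (int j - b)) = 1" by (rule L_unit'[of n 1 _ "-b"]) (use assms in auto)
  finally show ?thesis by simp
qed

lemma cell_down:
  assumes "n > 0"
  shows "(\<Sum>j<n. cellv n (x + int j) (int j) a b) = ind n (x - (a - b))"
proof -
  have pt: "cellv n (x + int j) (int j) a b = ind n (x - (a - b)) * ind n (int j - b)" for j
  proof (cases "int n dvd (int j - b)")
    case True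
    moreover have "(x + int j - a) - (x - (a - b)) = int j - b" by simp
    ultimately have "int n dvd ((x + int j - a) - (x - (a - b)))" by simp
    then show ?thesis unfolding cellv_def using ind_cong by metis
  next
    case False then show ?thesis unfolding cellv_def ind_def by simp
  qed
  have "(\<Sum>j<n. cellv n (x + int j) (int j) a b) = ind n (x - (a - b)) * (\<Sum>j<n. ind n (int j - b))"
    unfolding pt by (simp add: sum_distrib_left)
  also have "(\<Sum>j<n. ind n (int j - b)) = 1" by (rule L_unit'[of n 1 _ "-b"]) (use assms in auto)
  finally show ?thesis by simp
qed

definition G :: "nat \<Rightarrow> int \<Rightarrow> int \<Rightarrow> real" where
  "G n x y = ind n (x - (2 * y + 6)) + ind n (x - (2 * y - 6))
    + cellv n x y 0 0 + cellv n x y 6 (-3) + cellv n x y 12 6 + cellv n x y 4 2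
    + cellv n x y 6 3 + cellv n x y (-2) (-1) + cellv n x y 4 8 + cellv n x y 10 5
    - cellv n x y 6 0 - cellv n x y 0 (-3) - cellv n x y 6 6 - cellv n x y (-2) 2
    - cellv n x y 12 3 - cellv n x y 4 (-1) - cellv n x y 10 8 - cellv n x y 4 5"

lemma G_row:
  assumes "n > 0" "gcd n 30 = 1"
  shows "(\<Sum>j<n. G n x (int j)) = 2"
proof -
  note cp = cops[OF assms(2)]
  have l1: "(\<Sum>j<n. ind n (x - (2 * int j + 6))) = 1"
    by (rule L_unit'[of n "-2" _ "x - 6"]) (use assms cp in auto)
  have l2: "(\<Sum>j<n. ind n (x - (2 * int j - 6))) = 1"
    by (rule L_unit'[of n "-2" _ "x + 6"]) (use assms cp in auto)
  show ?thesis unfolding G_def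
    by (simp only: sum.distrib sum_subtractf l1 l2 cell_row[OF assms(1)]; simp)
qed

lemma G_col:
  assumes "n > 0" "gcd n 30 = 1"
  shows "(\<Sum>i<n. G n (int i) y) = 2"
proof -
  have l1: "(\<Sum>i<n. ind n (int i - (2 * y + 6))) = 1"
    by (rule L_unit'[of n 1 _ "- (2 * y + 6)"]) (use assms in auto)
  have l2: "(\<Sum>i<n. ind n (int i - (2 * y - 6))) = 1"
    by (rule L_unit'[of n 1 _ "- (2 * y - 6)"]) (use assms in auto)
  show ?thesis unfolding G_def
    by (simp only: sum.distrib sum_subtractf l1 l2 cell_col[OF assms(1)]; simp)
qed

lemma G_up:
  assumes "n > 0" "gcd n 30 = 1"
  shows "(\<Sum>j<n. G n (x - int j) (int j)) = 2"
proof -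
  note cp = cops[OF assms(2)]
  have l1: "(\<Sum>j<n. ind n (x - int j - (2 * int j + 6))) = 1"
    by (rule L_unit'[of n "-3" _ "x - 6"]) (use assms cp in auto)
  have l2: "(\<Sum>j<n. ind n (x - int j - (2 * int j - 6))) = 1"
    by (rule L_unit'[of n "-3" _ "x + 6"]) (use assms cp in auto)
  show ?thesis unfolding G_def
    by (simp only: sum.distrib sum_subtractf l1 l2 cell_up[OF assms(1)]; simp)
qed

lemma G_down:
  assumes "n > 0" "gcd n 30 = 1"
  shows "(\<Sum>j<n. G n (x + int j) (int j)) = 2"
proof -
  have l1: "(\<Sum>j<n. ind n (x + int j - (2 * int j + 6))) = 1"
    by (rule L_unit'[of n "-1" _ "x - 6"]) (use assms in auto)
  have l2: "(\<Sum>j<n. ind n (x + int j - (2 * int j - 6))) = 1"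
    by (rule L_unit'[of n "-1" _ "x + 6"]) (use assms in auto)
  show ?thesis unfolding G_def
    by (simp only: sum.distrib sum_subtractf l1 l2 cell_down[OF assms(1)]; simp)
qed

lemma ind01: "ind n x = 0 \<or> ind n x = 1" unfolding ind_def by simp
lemma ind_nonneg: "ind n x \<ge> 0" unfolding ind_def by simp
lemma cellv_nonneg: "cellv n x y a b \<ge> 0" unfolding cellv_def ind_def by simp
lemma cellv01: "cellv n x y a b = 0 \<or> cellv n x y a b = 1" unfolding cellv_def ind_def by simp
lemma ind_minus: "ind n (- x) = ind n x" unfolding ind_def by simp

lemma smooth_ndvd:
  assumes "n > 1" "gcd n 30 = 1" "d = 2 ^ a * 3 ^ b * 5 ^ c"
  shows "\<not> int n dvd d"
proof
  assume dv: "int n dvd d"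
  note cp = cops[OF assms(2)]
  have "coprime (int n) (2 ^ a * 3 ^ b * 5 ^ c)"
    using cp by (simp add: coprime_commute)
  then have "coprime (int n) d" using assms(3) by simp
  then have "is_unit (int n)" using coprime_common_divisor[of "int n" d "int n"] dv by simp
  then show False using assms(1) by simp
qed

lemma four:
  fixes c1 c2 c3 c4 L :: real
  assumes "c1 = 0 \<or> c1 = 1" "c2 = 0 \<or> c2 = 1" "c3 = 0 \<or> c3 = 1" "c4 = 0 \<or> c4 = 1"
    "c1 * c2 = 0" "c1 * c3 = 0" "c1 * c4 = 0" "c2 * c3 = 0" "c2 * c4 = 0" "c3 * c4 = 0"
    "c1 \<le> L" "c2 \<le> L" "c3 \<le> L" "c4 \<le> L" "L \<ge> 0"
  shows "c1 + c2 + c3 + c4 \<le> L"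
  using assms by auto

lemma excl_b:
  assumes "\<not> int n dvd (b' - b)"
  shows "cellv n x y a b * cellv n x y a' b' = 0"
proof (cases "int n dvd (y - b) \<and> int n dvd (y - b')")
  case True
  then have "int n dvd ((y - b) - (y - b'))" by (blast intro: dvd_diff)
  then show ?thesis using assms by simp
next
  case False then show ?thesis unfolding cellv_def ind_def by auto
qed

lemma on_L1:
  assumes "a - (2 * b + 6) = 0"
  shows "cellv n x y a b \<le> ind n (x - (2 * y + 6))"
proof (cases "int n dvd (x - a) \<and> int n dvd (y - b)")
  case True
  have eq: "x - (2 * y + 6) = (x - a) - 2 * (y - b)" using assms by algebra
  have "int n dvd (x - (2 * y + 6))" unfolding eq using True by (blast intro: dvd_diff dvd_mult)
  then show ?thesis using True unfolding cellv_def ind_def by simp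
next
  case False then show ?thesis unfolding cellv_def ind_def by auto
qed

lemma on_L2:
  assumes "a - (2 * b - 6) = 0"
  shows "cellv n x y a b \<le> ind n (x - (2 * y - 6))"
proof (cases "int n dvd (x - a) \<and> int n dvd (y - b)")
  case True
  have eq: "x - (2 * y - 6) = (x - a) - 2 * (y - b)" using assms by algebra
  have "int n dvd (x - (2 * y - 6))" unfolding eq using True by (blast intro: dvd_diff dvd_mult)
  then show ?thesis using True unfolding cellv_def ind_def by simp
next
  case False then show ?thesis unfolding cellv_def ind_def by auto
qed

lemma G_nonneg:
  assumes "n > 1" "gcd n 30 = 1"
  shows "G n x y \<ge> 0"
proof -
  have nd1: "\<not> int n dvd 1" by (rule smooth_ndvd[OF assms, of _ 0 0 0]) simp
  have nd1': "n \<noteq> 1" "\<not> int n dvd (-1)" using nd1 assms(1) by simp_all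
  have nd2: "\<not> int n dvd 2" by (rule smooth_ndvd[OF assms, of _ 1 0 0]) simp
  have nd3: "\<not> int n dvd 3" by (rule smooth_ndvd[OF assms, of _ 0 1 0]) simp
  have nd4: "\<not> int n dvd 4" by (rule smooth_ndvd[OF assms, of _ 2 0 0]) simp
  have nd6: "\<not> int n dvd 6" by (rule smooth_ndvd[OF assms, of _ 1 1 0]) simp
  have x14: "cellv n x y 6 0 * cellv n x y 4 (-1) = 0" by (rule excl_b) (use nd1' in simp)
  have h1: "cellv n x y 6 0 + cellv n x y 0 (-3) + cellv n x y 12 3 + cellv n x y 4 (-1)
      \<le> ind n (x - (2 * y + 6))"
    by (rule four) (simp_all add: x14 cellv01 ind_nonneg on_L1 excl_b nd1 nd1' nd2 nd3 nd4 nd6)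
  have y14: "cellv n x y 6 6 * cellv n x y 4 5 = 0" by (rule excl_b) (use nd1' in simp)
  have h2: "cellv n x y 6 6 + cellv n x y (-2) 2 + cellv n x y 10 8 + cellv n x y 4 5
      \<le> ind n (x - (2 * y - 6))"
    by (rule four) (simp_all add: y14 cellv01 ind_nonneg on_L2 excl_b nd1 nd1' nd2 nd3 nd4 nd6)
  have p: "cellv n x y 0 0 \<ge> 0" "cellv n x y 6 (-3) \<ge> 0" "cellv n x y 12 6 \<ge> 0" "cellv n x y 4 2 \<ge> 0"
    "cellv n x y 6 3 \<ge> 0" "cellv n x y (-2) (-1) \<ge> 0" "cellv n x y 4 8 \<ge> 0" "cellv n x y 10 5 \<ge> 0"
    by (simp_all add: cellv_nonneg)
  show ?thesis unfolding G_def using h1 h2 p by linarith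
qed

lemma nds:
  assumes "n > 1" "gcd n 30 = 1"
    "d \<in> {1,2,3,4,5,6,8,9,10,12,16,18,-1,-2,-3,-4,-5,-6,-8,-9,-10,-12,-16,-18}"
  shows "\<not> int n dvd d"
proof -
  have h1: "\<not> int n dvd 1" by (rule smooth_ndvd[OF assms(1,2), of _ 0 0 0]) simp
  have h2: "\<not> int n dvd 2" by (rule smooth_ndvd[OF assms(1,2), of _ 1 0 0]) simp
  have h3: "\<not> int n dvd 3" by (rule smooth_ndvd[OF assms(1,2), of _ 0 1 0]) simp
  have h4: "\<not> int n dvd 4" by (rule smooth_ndvd[OF assms(1,2), of _ 2 0 0]) simp
  have h5: "\<not> int n dvd 5" by (rule smooth_ndvd[OF assms(1,2), of _ 0 0 1]) simp
  have h6: "\<not> int n dvd 6" by (rule smooth_ndvd[OF assms(1,2), of _ 1 1 0]) simp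
  have h7: "\<not> int n dvd 8" by (rule smooth_ndvd[OF assms(1,2), of _ 3 0 0]) simp
  have h8: "\<not> int n dvd 9" by (rule smooth_ndvd[OF assms(1,2), of _ 0 2 0]) simp
  have h9: "\<not> int n dvd 10" by (rule smooth_ndvd[OF assms(1,2), of _ 1 0 1]) simp
  have h10: "\<not> int n dvd 12" by (rule smooth_ndvd[OF assms(1,2), of _ 2 1 0]) simp
  have h11: "\<not> int n dvd 16" by (rule smooth_ndvd[OF assms(1,2), of _ 4 0 0]) simp
  have h12: "\<not> int n dvd 18" by (rule smooth_ndvd[OF assms(1,2), of _ 1 2 0]) simp
  note h = h1 h2 h3 h4 h5 h6 h7 h8 h9 h10 h11 h12
  from assms(3) show ?thesis using h by (auto simp only: insert_iff empty_iff dvd_minus_iff)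
qed

lemma dvd2: assumes "gcd n 30 = 1" "int n dvd 2 * z" shows "int n dvd z"
proof -
  have "coprime (int n) 2" using cops(1)[OF assms(1)] by (simp add: coprime_commute)
  then show ?thesis using assms(2) by (simp add: coprime_dvd_mult_right_iff)
qed

lemma row_zero: "int n dvd (x + c) \<Longrightarrow> \<not> int n dvd (c + a) \<Longrightarrow> cellv n x y a b = 0"
proof -
  assume h: "int n dvd (x + c)" "\<not> int n dvd (c + a)"
  have "\<not> int n dvd (x - a)"
  proof
    assume "int n dvd (x - a)"
    with h(1) have "int n dvd ((x + c) - (x - a))" by (rule dvd_diff)
    then show False using h(2) by simp
  qed
  then show ?thesis unfolding cellv_def ind_def by simp
qed

lemma col_zero: "int n dvd y \<Longrightarrow> \<not> int n dvd b \<Longrightarrow> cellv n x y a b = 0"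
proof -
  assume h: "int n dvd y" "\<not> int n dvd b"
  have "\<not> int n dvd (y - b)"
  proof
    assume "int n dvd (y - b)"
    with h(1) have "int n dvd (y - (y - b))" by (rule dvd_diff)
    then show False using h(2) by simp
  qed
  then show ?thesis unfolding cellv_def ind_def by simp
qed

lemma diag_zero: "int n dvd (x - y) \<Longrightarrow> \<not> int n dvd (a - b) \<Longrightarrow> cellv n x y a b = 0"
proof -
  assume h: "int n dvd (x - y)" "\<not> int n dvd (a - b)"
  have "\<not> (int n dvd (x - a) \<and> int n dvd (y - b))"
  proof
    assume "int n dvd (x - a) \<and> int n dvd (y - b)"
    then have "int n dvd ((x - y) - (x - a) + (y - b))" using h(1) by (blast intro: dvd_diff dvd_add)
    then show False using h(2) by simp
  qed
  then show ?thesis unfolding cellv_def ind_def by auto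
qed

lemma supp_row:
  assumes "n > 1" "gcd n 30 = 1" "int n dvd (x + 6)" "G n x y \<noteq> 0"
  shows "int n dvd (y + 6) \<or> int n dvd y"
proof (rule ccontr)
  assume nn: "\<not> (int n dvd (y + 6) \<or> int n dvd y)"
  have z1: "cellv n x y 0 0 = 0" by (rule row_zero[OF assms(3)]) (rule nds[OF assms(1,2)], simp)
  have z2: "cellv n x y 6 (-3) = 0" by (rule row_zero[OF assms(3)]) (rule nds[OF assms(1,2)], simp)
  have z3: "cellv n x y 12 6 = 0" by (rule row_zero[OF assms(3)]) (rule nds[OF assms(1,2)], simp)
  have z4: "cellv n x y 4 2 = 0" by (rule row_zero[OF assms(3)]) (rule nds[OF assms(1,2)], simp)
  have z5: "cellv n x y 6 3 = 0" by (rule row_zero[OF assms(3)]) (rule nds[OF assms(1,2)], simp)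
  have z6: "cellv n x y (-2) (-1) = 0" by (rule row_zero[OF assms(3)]) (rule nds[OF assms(1,2)], simp)
  have z7: "cellv n x y 4 8 = 0" by (rule row_zero[OF assms(3)]) (rule nds[OF assms(1,2)], simp)
  have z8: "cellv n x y 10 5 = 0" by (rule row_zero[OF assms(3)]) (rule nds[OF assms(1,2)], simp)
  have z9: "cellv n x y 6 0 = 0" by (rule row_zero[OF assms(3)]) (rule nds[OF assms(1,2)], simp)
  have z10: "cellv n x y 0 (-3) = 0" by (rule row_zero[OF assms(3)]) (rule nds[OF assms(1,2)], simp)
  have z11: "cellv n x y 6 6 = 0" by (rule row_zero[OF assms(3)]) (rule nds[OF assms(1,2)], simp)
  have z12: "cellv n x y (-2) 2 = 0" by (rule row_zero[OF assms(3)]) (rule nds[OF assms(1,2)], simp)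
  have z13: "cellv n x y 12 3 = 0" by (rule row_zero[OF assms(3)]) (rule nds[OF assms(1,2)], simp)
  have z14: "cellv n x y 4 (-1) = 0" by (rule row_zero[OF assms(3)]) (rule nds[OF assms(1,2)], simp)
  have z15: "cellv n x y 10 8 = 0" by (rule row_zero[OF assms(3)]) (rule nds[OF assms(1,2)], simp)
  have z16: "cellv n x y 4 5 = 0" by (rule row_zero[OF assms(3)]) (rule nds[OF assms(1,2)], simp)
  note z = z1 z2 z3 z4 z5 z6 z7 z8 z9 z10 z11 z12 z13 z14 z15 z16
  have l1: "ind n (x - (2 * y + 6)) = 0"
  proof -
    have "\<not> int n dvd (x - (2 * y + 6))"
    proof
      assume "int n dvd (x - (2 * y + 6))"
      with assms(3) have "int n dvd ((x + 6) - (x - (2 * y + 6)))" by (rule dvd_diff)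
      then have "int n dvd 2 * (y + 6)" by (simp add: algebra_simps)
      then have "int n dvd (y + 6)" by (rule dvd2[OF assms(2)])
      then show False using nn by simp
    qed
    then show ?thesis unfolding ind_def by simp
  qed
  have l2: "ind n (x - (2 * y - 6)) = 0"
  proof -
    have "\<not> int n dvd (x - (2 * y - 6))"
    proof
      assume "int n dvd (x - (2 * y - 6))"
      with assms(3) have "int n dvd ((x + 6) - (x - (2 * y - 6)))" by (rule dvd_diff)
      then have "int n dvd 2 * y" by (simp add: algebra_simps)
      then have "int n dvd y" by (rule dvd2[OF assms(2)])
      then show False using nn by simp
    qed
    then show ?thesis unfolding ind_def by simp
  qed
  have "G n x y = 0" unfolding G_def using z l1 l2 by simp
  then show False using assms(4) by simp
qed

lemma supp_col:
  assumes "n > 1" "gcd n 30 = 1" "int n dvd y" "G n x y \<noteq> 0"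
  shows "int n dvd (x + 6) \<or> int n dvd x"
proof (rule ccontr)
  assume nn: "\<not> (int n dvd (x + 6) \<or> int n dvd x)"
  have z17: "cellv n x y 6 (-3) = 0" by (rule col_zero[OF assms(3)]) (rule nds[OF assms(1,2)], simp)
  have z18: "cellv n x y 12 6 = 0" by (rule col_zero[OF assms(3)]) (rule nds[OF assms(1,2)], simp)
  have z19: "cellv n x y 4 2 = 0" by (rule col_zero[OF assms(3)]) (rule nds[OF assms(1,2)], simp)
  have z20: "cellv n x y 6 3 = 0" by (rule col_zero[OF assms(3)]) (rule nds[OF assms(1,2)], simp)
  have z21: "cellv n x y (-2) (-1) = 0" by (rule col_zero[OF assms(3)]) (rule nds[OF assms(1,2)], simp)
  have z22: "cellv n x y 4 8 = 0" by (rule col_zero[OF assms(3)]) (rule nds[OF assms(1,2)], simp)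
  have z23: "cellv n x y 10 5 = 0" by (rule col_zero[OF assms(3)]) (rule nds[OF assms(1,2)], simp)
  have z24: "cellv n x y 0 (-3) = 0" by (rule col_zero[OF assms(3)]) (rule nds[OF assms(1,2)], simp)
  have z25: "cellv n x y 6 6 = 0" by (rule col_zero[OF assms(3)]) (rule nds[OF assms(1,2)], simp)
  have z26: "cellv n x y (-2) 2 = 0" by (rule col_zero[OF assms(3)]) (rule nds[OF assms(1,2)], simp)
  have z27: "cellv n x y 12 3 = 0" by (rule col_zero[OF assms(3)]) (rule nds[OF assms(1,2)], simp)
  have z28: "cellv n x y 4 (-1) = 0" by (rule col_zero[OF assms(3)]) (rule nds[OF assms(1,2)], simp)
  have z29: "cellv n x y 10 8 = 0" by (rule col_zero[OF assms(3)]) (rule nds[OF assms(1,2)], simp)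
  have z30: "cellv n x y 4 5 = 0" by (rule col_zero[OF assms(3)]) (rule nds[OF assms(1,2)], simp)
  note z = z17 z18 z19 z20 z21 z22 z23 z24 z25 z26 z27 z28 z29 z30
  have c00: "cellv n x y 0 0 = 0" using nn unfolding cellv_def ind_def by simp
  have c60: "cellv n x y 6 0 = ind n (x - 6)" using assms(3) unfolding cellv_def ind_def by simp
  have l1: "ind n (x - (2 * y + 6)) = ind n (x - 6)"
  proof (rule ind_cong)
    have e: "x - (2 * y + 6) - (x - 6) = - (2 * y)" by simp
    have "int n dvd 2 * y" using assms(3) by (rule dvd_mult)
    then show "int n dvd (x - (2 * y + 6) - (x - 6))" unfolding e by (simp only: dvd_minus_iff)
  qed
  have l2: "ind n (x - (2 * y - 6)) = 0"
  proof -
    have y2: "int n dvd 2 * y" using assms(3) by (rule dvd_mult)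
    have "\<not> int n dvd (x - (2 * y - 6))"
    proof
      assume "int n dvd (x - (2 * y - 6))"
      then have "int n dvd ((x - (2 * y - 6)) + 2 * y)" using y2 by (rule dvd_add)
      then show False using nn by simp
    qed
    then show ?thesis unfolding ind_def by simp
  qed
  have "G n x y = 0" unfolding G_def using z c00 c60 l1 l2 by simp
  then show False using assms(4) by simp
qed

lemma supp_diag:
  assumes "n > 1" "gcd n 30 = 1" "int n dvd (x - y)" "G n x y \<noteq> 0"
  shows "int n dvd (x + 6) \<or> int n dvd x"
proof (rule ccontr)
  assume nn: "\<not> (int n dvd (x + 6) \<or> int n dvd x)"
  have z31: "cellv n x y 6 (-3) = 0" by (rule diag_zero[OF assms(3)]) (rule nds[OF assms(1,2)], simp)
  have z32: "cellv n x y 12 6 = 0" by (rule diag_zero[OF assms(3)]) (rule nds[OF assms(1,2)], simp)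
  have z33: "cellv n x y 4 2 = 0" by (rule diag_zero[OF assms(3)]) (rule nds[OF assms(1,2)], simp)
  have z34: "cellv n x y 6 3 = 0" by (rule diag_zero[OF assms(3)]) (rule nds[OF assms(1,2)], simp)
  have z35: "cellv n x y (-2) (-1) = 0" by (rule diag_zero[OF assms(3)]) (rule nds[OF assms(1,2)], simp)
  have z36: "cellv n x y 4 8 = 0" by (rule diag_zero[OF assms(3)]) (rule nds[OF assms(1,2)], simp)
  have z37: "cellv n x y 10 5 = 0" by (rule diag_zero[OF assms(3)]) (rule nds[OF assms(1,2)], simp)
  have z38: "cellv n x y 6 0 = 0" by (rule diag_zero[OF assms(3)]) (rule nds[OF assms(1,2)], simp)
  have z39: "cellv n x y 0 (-3) = 0" by (rule diag_zero[OF assms(3)]) (rule nds[OF assms(1,2)], simp)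
  have z40: "cellv n x y (-2) 2 = 0" by (rule diag_zero[OF assms(3)]) (rule nds[OF assms(1,2)], simp)
  have z41: "cellv n x y 12 3 = 0" by (rule diag_zero[OF assms(3)]) (rule nds[OF assms(1,2)], simp)
  have z42: "cellv n x y 4 (-1) = 0" by (rule diag_zero[OF assms(3)]) (rule nds[OF assms(1,2)], simp)
  have z43: "cellv n x y 10 8 = 0" by (rule diag_zero[OF assms(3)]) (rule nds[OF assms(1,2)], simp)
  have z44: "cellv n x y 4 5 = 0" by (rule diag_zero[OF assms(3)]) (rule nds[OF assms(1,2)], simp)
  note z = z31 z32 z33 z34 z35 z36 z37 z38 z39 z40 z41 z42 z43 z44
  have c00: "cellv n x y 0 0 = 0" using nn unfolding cellv_def ind_def by simp
  have c66: "cellv n x y 6 6 = ind n (x - 6)"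
  proof -
    have "ind n (y - 6) = ind n (x - 6)"
    proof (rule ind_cong)
      have "y - 6 - (x - 6) = y - x" by simp
      then show "int n dvd (y - 6 - (x - 6))" using assms(3) by (simp add: dvd_diff_commute)
    qed
    then show ?thesis unfolding cellv_def ind_def by simp
  qed
  have l2: "ind n (x - (2 * y - 6)) = ind n (x - 6)"
  proof -
    have "ind n (x - (2 * y - 6)) = ind n (- (x - 6))"
    proof (rule ind_cong)
      have e: "x - (2 * y - 6) - (- (x - 6)) = 2 * (x - y)" by simp
      have "int n dvd 2 * (x - y)" using assms(3) by (rule dvd_mult)
      then show "int n dvd (x - (2 * y - 6) - (- (x - 6)))" by (simp only: e)
    qed
    then show ?thesis using ind_minus[of n "x - 6"] by simp
  qed
  have l1: "ind n (x - (2 * y + 6)) = 0"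
  proof -
    have "\<not> int n dvd (x - (2 * y + 6))"
    proof
      assume "int n dvd (x - (2 * y + 6))"
      moreover have "int n dvd 2 * (x - y)" using assms(3) by (rule dvd_mult)
      ultimately have "int n dvd (2 * (x - y) - (x - (2 * y + 6)))" by (rule dvd_diff[rotated])
      then have "int n dvd (x + 6)" by (simp add: algebra_simps)
      then show False using nn by simp
    qed
    then show ?thesis unfolding ind_def by simp
  qed
  have "G n x y = 0" unfolding G_def using z c00 c66 l1 l2 by simp
  then show False using assms(4) by simp
qed

lemma n7: assumes "n > 1" "gcd n 30 = (1::nat)" shows "n \<ge> 7"
proof (rule ccontr)
  assume "\<not> n \<ge> 7"
  then have "n = 2 \<or> n = 3 \<or> n = 4 \<or> n = 5 \<or> n = 6" using assms(1) by linarith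
  moreover have "n \<noteq> 4"
  proof
    assume "n = 4"
    then have "(2::nat) dvd gcd n 30" by (intro gcd_greatest) simp_all
    then show False using assms(2) by simp
  qed
  ultimately show False using assms(2) by auto
qed

definition Mx :: "nat \<Rightarrow> nat \<Rightarrow> nat \<Rightarrow> real" where
  "Mx n i j = G n (int i) (int j) / 2"

lemma G_modup: "j < n \<Longrightarrow> G n (int ((k + n - j) mod n)) y = G n (int k - int j) y"
  unfolding G_def cellv_def by (simp only: ind_up)

lemma G_moddown: "G n (int ((k + j) mod n)) y = G n (int k + int j) y"
  unfolding G_def cellv_def by (simp only: ind_down)

lemma Mx_pan:
  assumes "n > 1" "gcd n 30 = 1"
  shows "panstochastic n (Mx n)"
proof -
  have n0: "n > 0" using assms(1) by simp
  have r: "(\<Sum>j<n. Mx n i j) = 1" for i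
    unfolding Mx_def sum_divide_distrib[symmetric] using G_row[OF n0 assms(2)] by simp
  have c: "(\<Sum>i<n. Mx n i j) = 1" for j
    unfolding Mx_def sum_divide_distrib[symmetric] using G_col[OF n0 assms(2)] by simp
  have u: "(\<Sum>(i,j)\<in>{(i,j). i < n \<and> j < n \<and> (i + j) mod n = k}. Mx n i j) = 1" if k: "k < n" for k
  proof -
    have "(\<Sum>(i,j)\<in>{(i,j). i < n \<and> j < n \<and> (i + j) mod n = k}. Mx n i j)
        = (\<Sum>j<n. Mx n ((k + n - j) mod n) j)" by (rule sum_up[OF k])
    also have "\<dots> = (\<Sum>j<n. G n (int k - int j) (int j)) / 2"
      unfolding Mx_def sum_divide_distrib[symmetric] by (intro arg_cong[where f="\<lambda>x. x / 2"] sum.cong) (simp_all add: G_modup)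
    also have "\<dots> = 1" using G_up[OF n0 assms(2)] by simp
    finally show ?thesis .
  qed
  have d: "(\<Sum>(i,j)\<in>{(i,j). i < n \<and> j < n \<and> (i + n - j) mod n = k}. Mx n i j) = 1" if k: "k < n" for k
  proof -
    have "(\<Sum>(i,j)\<in>{(i,j). i < n \<and> j < n \<and> (i + n - j) mod n = k}. Mx n i j)
        = (\<Sum>j<n. Mx n ((k + j) mod n) j)" by (rule sum_down[OF k])
    also have "\<dots> = (\<Sum>j<n. G n (int k + int j) (int j)) / 2"
      unfolding Mx_def sum_divide_distrib[symmetric] by (intro arg_cong[where f="\<lambda>x. x / 2"] sum.cong) (simp_all add: G_moddown)
    also have "\<dots> = 1" using G_down[OF n0 assms(2)] by simp
    finally show ?thesis .
  qed
  have nn: "0 \<le> Mx n i j" for i j unfolding Mx_def using G_nonneg[OF assms] by simp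
  show ?thesis unfolding panstochastic_def using r c u d nn by blast
qed

lemma dvd6_eq:
  assumes "j < n" "n \<ge> 7" "int n dvd (int j + 6)"
  shows "j = n - 6"
proof -
  have "int n dvd int (j + 6)" using assms(3) by simp
  then have dv: "n dvd (j + 6)" by (simp only: of_nat_dvd_iff)
  have ge: "n \<le> j + 6" using dv by (rule dvd_imp_le) simp
  have dv2: "n dvd (j + 6 - n)" by (rule dvd_diff_nat[OF dv dvd_refl])
  have lt: "j + 6 - n < n" using assms(1,2) by arith
  have "j + 6 - n = 0"
  proof (rule ccontr)
    assume "j + 6 - n \<noteq> 0"
    then have "n \<le> j + 6 - n" using dv2 by (intro dvd_imp_le) simp_all
    then show False using lt by simp
  qed
  then show ?thesis using ge by simp
qed

lemma dvd0_eq: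
  assumes "j < n" "int n dvd int j"
  shows "j = 0"
proof (rule ccontr)
  assume "j \<noteq> 0"
  have "n dvd j" using assms(2) by (simp only: of_nat_dvd_iff)
  then have "n \<le> j" using \<open>j \<noteq> 0\<close> by (intro dvd_imp_le) simp_all
  then show False using assms(1) by simp
qed

lemma sum_ind_one:
  fixes n :: nat
  assumes "(\<Sum>j<n. if P j then 1 else (0::real)) = 1"
  obtains j0 where "{j. j < n \<and> P j} = {j0}"
proof -
  have "(\<Sum>j<n. if P j then 1 else (0::real)) = (\<Sum>j\<in>{j \<in> {..<n}. P j}. 1)"
    by (rule sum.inter_filter[symmetric]) simp
  also have "\<dots> = real (card {j \<in> {..<n}. P j})" by simp
  finally have "card {j \<in> {..<n}. P j} = 1" using assms by simp
  then obtain j0 where h: "{j \<in> {..<n}. P j} = {j0}" by (rule card_1_singletonE)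
  have "{j. j < n \<and> P j} = {j \<in> {..<n}. P j}" by auto
  then have "{j. j < n \<and> P j} = {j0}" using h by simp
  then show ?thesis by (rule that)
qed

theorem lemma4p1:
  fixes n :: nat
  assumes "n > 1" and "gcd n 30 = 1"
  shows "\<exists>M. panstochastic n M \<and> \<not> convex_comb_panmagic n M"
proof (intro exI conjI)
  show "panstochastic n (Mx n)" by (rule Mx_pan[OF assms])
  show "\<not> convex_comb_panmagic n (Mx n)"
  proof
    assume "convex_comb_panmagic n (Mx n)"
    then obtain S c where S: "finite S" "\<forall>\<pi>\<in>S. panmagic_perm n \<pi>" "\<forall>\<pi>\<in>S. 0 \<le> c \<pi>"
      "(\<Sum>\<pi>\<in>S. c \<pi>) = (1::real)"
      "\<forall>i<n. \<forall>j<n. Mx n i j = (\<Sum>\<pi>\<in>S. c \<pi> * perm_mat n \<pi> i j)"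
      unfolding convex_comb_panmagic_def by blast
    have "\<exists>\<pi>\<in>S. c \<pi> > 0"
    proof (rule ccontr)
      assume "\<not> (\<exists>\<pi>\<in>S. c \<pi> > 0)"
      then have "\<forall>\<pi>\<in>S. c \<pi> = 0" using S(3) by force
      then have "(\<Sum>\<pi>\<in>S. c \<pi>) = 0" by simp
      then show False using S(4) by simp
    qed
    then obtain p where p: "p \<in> S" "c p > 0" by blast
    have pp: "p permutes {..<n}" "panstochastic n (perm_mat n p)"
      using S(2) p(1) unfolding panmagic_perm_def by auto
    have n7: "n \<ge> 7" by (rule n7[OF assms])
    have pl: "p j < n" if "j < n" for j
    proof -
      have "p j \<in> {..<n}" using permutes_in_image[OF pp(1), of j] that by simp
      then show ?thesis by simp
    qed
    have injp: "inj p" using pp(1) by (rule permutes_inj)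
    have pos: "G n (int (p j)) (int j) \<noteq> 0" if j: "j < n" for j
    proof -
      have "c p * perm_mat n p (p j) j \<le> (\<Sum>\<pi>\<in>S. c \<pi> * perm_mat n \<pi> (p j) j)"
      proof (rule member_le_sum)
        show "p \<in> S" by (rule p(1))
        show "finite S" by (rule S(1))
        fix x assume "x \<in> S - {p}"
        then have "0 \<le> c x" using S(3) by blast
        moreover have "0 \<le> perm_mat n x (p j) j" unfolding perm_mat_def by simp
        ultimately show "0 \<le> c x * perm_mat n x (p j) j" by (rule mult_nonneg_nonneg)
      qed
      also have "\<dots> = Mx n (p j) j" using S(5) pl[OF j] j by simp
      finally have "Mx n (p j) j > 0" using p(2) by (simp add: perm_mat_def)
      then show ?thesis unfolding Mx_def by auto
    qed
    have n0: "0 < n" using assms(1) by simp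
    have "\<forall>k<n. (\<Sum>(i,j)\<in>{(i,j). i < n \<and> j < n \<and> (i + n - j) mod n = k}. perm_mat n p i j) = 1"
      using pp(2) unfolding panstochastic_def by blast
    then have s1: "(\<Sum>(i,j)\<in>{(i,j). i < n \<and> j < n \<and> (i + n - j) mod n = 0}. perm_mat n p i j) = 1"
      using n0 by blast
    have s2: "(\<Sum>(i,j)\<in>{(i,j). i < n \<and> j < n \<and> (i + n - j) mod n = 0}. perm_mat n p i j)
        = (\<Sum>j<n. perm_mat n p ((0 + j) mod n) j)" by (rule sum_down[OF n0])
    have s3: "(\<Sum>j<n. perm_mat n p ((0 + j) mod n) j) = (\<Sum>j<n. if j = p j then 1 else (0::real))"
      by (rule sum.cong) (simp_all add: perm_mat_def)
    have "(\<Sum>j<n. if j = p j then 1 else (0::real)) = 1" using s1 s2 s3 by simp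
    then obtain j0 where fx0: "{j. j < n \<and> j = p j} = {j0}" by (rule sum_ind_one)
    have "j0 \<in> {j. j < n \<and> j = p j}" using fx0 by simp
    then have j0: "j0 < n" "p j0 = j0" by auto
    have fxu: "j = j0" if "j < n" "p j = j" for j
    proof -
      have "j \<in> {j. j < n \<and> j = p j}" using that by simp
      then show ?thesis using fx0 by simp
    qed
    have "G n (int j0) (int j0) \<noteq> 0" using pos[OF j0(1)] j0(2) by simp
    then have "int n dvd (int j0 + 6) \<or> int n dvd int j0"
      using supp_diag[OF assms, of "int j0" "int j0"] by simp
    then have j0c: "j0 = n - 6 \<or> j0 = 0" using dvd6_eq[OF j0(1) n7] dvd0_eq[OF j0(1)] by blast
    have "G n (int (p 0)) 0 \<noteq> 0" using pos[of 0] assms(1) by simp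
    then have "int n dvd (int (p 0) + 6) \<or> int n dvd int (p 0)"
      using supp_col[OF assms, of 0 "int (p 0)"] by simp
    then have p0: "p 0 = n - 6 \<or> p 0 = 0"
      using dvd6_eq[OF pl[of 0] n7] dvd0_eq[OF pl[of 0]] assms(1) by auto
    have "n - 6 \<in> p ` {..<n}" using pp(1) n7 by (simp add: permutes_image)
    then obtain jA where jA: "jA < n" "p jA = n - 6" by auto
    have "G n (int (n - 6)) (int jA) \<noteq> 0" using pos[OF jA(1)] jA(2) by simp
    moreover have "int n dvd (int (n - 6) + 6)" using n7 by simp
    ultimately have "int n dvd (int jA + 6) \<or> int n dvd int jA"
      using supp_row[OF assms, of "int (n - 6)" "int jA"] by blast
    then have jAc: "jA = n - 6 \<or> jA = 0" using dvd6_eq[OF jA(1) n7] dvd0_eq[OF jA(1)] by blast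
    show False
    proof (cases "jA = n - 6")
      case True
      then have "p (n - 6) = n - 6" using jA by simp
      then have "j0 = n - 6" using fxu[of "n - 6"] n7 by simp
      from p0 show False
      proof
        assume "p 0 = n - 6"
        then have "p 0 = p (n - 6)" using \<open>p (n - 6) = n - 6\<close> by simp
        then have "0 = n - 6" by (rule injD[OF injp])
        then show False using n7 by simp
      next
        assume "p 0 = 0"
        then have "0 = j0" using fxu[of 0] assms(1) by simp
        then show False using \<open>j0 = n - 6\<close> n7 by simp
      qed
    next
      case False
      then have "jA = 0" using jAc by simp
      then have "p 0 = n - 6" using jA by simp
      from j0c show False
      proof
        assume "j0 = n - 6"
        then have "p (n - 6) = p 0" using j0(2) \<open>p 0 = n - 6\<close> by simp
        then have "n - 6 = 0" by (rule injD[OF injp])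
        then show False using n7 by simp
      next
        assume "j0 = 0"
        then show False using j0(2) \<open>p 0 = n - 6\<close> n7 by simp
      qed
    qed
  qed
qed

end
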